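(* Let $f$ be a probability density on $\mathbb{R}$ and let $\pi_0$ be the value of the problem $$\text{maximize }\int h\quad\text{over}\quad\{h:\mathbb{R}\to\mathbb{R}_+\text{ log-concave},\ h\le f\text{ a.e.}\}.$$ Let $\hat f_n$ be a density estimator computed from a sample of size $n$ from $f$, with each $\hat f_n$ a probability density, and assume $$\mathbb{E}\left[\operatorname{ess\,sup}_{|x|\le a}\frac{\max\{\hat f_n(x),f(x)\}}{\min\{\hat f_n(x),f(x)\}}\right]\to1\quad\text{as }n\to\infty,\ \text{for every } a>0.$$ Let $\hat\pi_0$ be the value of the same optimization problem with $f$ replaced by $\hat f_n$. Then $\hat\pi_0\to\pi_0$ in probability as $n\to\infty$.
   Context: A function $h:\mathbb{R}\to[0,\infty)$ is log-concave if $\log h:\mathbb{R}\to[-\infty,\infty)$ is concave (with $\log0=-\infty$). *)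

theory Defs
  imports "HOL-Probability.Probability"
begin

definition prob_density :: "(real \<Rightarrow> real) \<Rightarrow> bool" where
  "prob_density f \<longleftrightarrow> f \<in> borel_measurable lborel \<and> (\<forall>x. 0 \<le> f x)
     \<and> integrable lborel f \<and> integral\<^sup>L lborel f = 1"

definition log_ext :: "(real \<Rightarrow> real) \<Rightarrow> real \<Rightarrow> ereal" where
  "log_ext h x = (if h x = 0 then -\<infinity> else ereal (ln (h x)))"

definition log_concave :: "(real \<Rightarrow> real) \<Rightarrow> bool" where
  "log_concave h \<longleftrightarrow> (\<forall>x. 0 \<le> h x) \<and>
     (\<forall>x y t. 0 \<le> t \<and> t \<le> 1 \<longrightarrow>
        ereal t * log_ext h x + ereal (1 - t) * log_ext h y \<le> log_ext h (t * x + (1 - t) * y))"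

definition lc_value :: "(real \<Rightarrow> real) \<Rightarrow> real" where
  "lc_value f = enn2real (SUP h \<in> {h. log_concave h \<and> (AE x in lborel. h x \<le> f x)}.
                              \<integral>\<^sup>+ x. ennreal (h x) \<partial>lborel)"

(* max{u,v}/min{u,v} with r/0 = \<infinity> for r > 0 and 0/0 = 1 *)
definition ratio :: "real \<Rightarrow> real \<Rightarrow> ennreal" where
  "ratio u v = (if min u v = 0 then (if max u v = 0 then 1 else \<top>)
                else ennreal (max u v / min u v))"

end

theory Submission
  imports Defs
begin


lemma lc_real:
  assumes "log_concave h" "0 \<le> t" "t \<le> 1" "h x > 0" "h y > 0"
  shows "h (t*x+(1-t)*y) > 0 \<and> t * ln (h x) + (1-t) * ln (h y) \<le> ln (h (t*x+(1-t)*y))"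
proof -
  have "ereal t * log_ext h x + ereal (1 - t) * log_ext h y \<le> log_ext h (t * x + (1 - t) * y)"
    using assms unfolding log_concave_def by blast
  hence *: "ereal (t * ln (h x) + (1-t) * ln (h y)) \<le> log_ext h (t * x + (1 - t) * y)"
    using assms(4,5) by (simp add: log_ext_def)
  have nn: "h (t*x+(1-t)*y) \<ge> 0" using assms(1) unfolding log_concave_def by blast
  show ?thesis
  proof (cases "h (t*x+(1-t)*y) = 0")
    case True then show ?thesis using * by (simp add: log_ext_def)
  next
    case False then show ?thesis using * nn by (simp add: log_ext_def)
  qed
qed

lemma lc_intro:
  assumes "\<And>x. 0 \<le> h x"
    and "\<And>x y t. 0 \<le> t \<Longrightarrow> t \<le> 1 \<Longrightarrow> h x > 0 \<Longrightarrow> h y > 0 \<Longrightarrow>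
       h (t*x+(1-t)*y) > 0 \<and> t * ln (h x) + (1-t) * ln (h y) \<le> ln (h (t*x+(1-t)*y))"
  shows "log_concave h"
  unfolding log_concave_def
proof (intro conjI allI impI)
  fix x show "0 \<le> h x" by fact
next
  fix x y t :: real assume t: "0 \<le> t \<and> t \<le> 1"
  have nf: "\<And>z. log_ext h z \<noteq> \<infinity>" by (simp add: log_ext_def)
  show "ereal t * log_ext h x + ereal (1 - t) * log_ext h y \<le> log_ext h (t * x + (1 - t) * y)"
  proof (cases "h x = 0")
    case hx: True
    show ?thesis
    proof (cases "t = 0")
      case True then show ?thesis by (simp add: zero_ereal_def[symmetric])
    next
      case False
      hence "ereal t * log_ext h x = -\<infinity>" using t hx by (simp add: log_ext_def)
      moreover have "ereal (1 - t) * log_ext h y \<noteq> \<infinity>"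
        using t nf[of y] by (cases "log_ext h y") (auto simp: ereal_mult_infty)
      ultimately have eq: "ereal t * log_ext h x + ereal (1 - t) * log_ext h y = -\<infinity>"
        by (cases "ereal (1 - t) * log_ext h y") auto
      show ?thesis unfolding eq by simp
    qed
  next
    case hx: False
    show ?thesis
    proof (cases "h y = 0")
      case hy: True
      show ?thesis
      proof (cases "t = 1")
        case True then show ?thesis by (simp add: zero_ereal_def[symmetric])
      next
        case False
        hence "ereal (1-t) * log_ext h y = -\<infinity>" using t hy by (simp add: log_ext_def)
        moreover have "ereal t * log_ext h x \<noteq> \<infinity>"
          using t nf[of x] by (cases "log_ext h x") (auto simp: ereal_mult_infty)
        ultimately have eq: "ereal t * log_ext h x + ereal (1 - t) * log_ext h y = -\<infinity>"
          by (cases "ereal t * log_ext h x") auto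
        show ?thesis unfolding eq by simp
      qed
    next
      case hy: False
      have px: "h x > 0" using hx assms(1)[of x] by simp
      have py: "h y > 0" using hy assms(1)[of y] by simp
      from assms(2)[OF _ _ px py, of t] t show ?thesis by (simp add: log_ext_def px py)
    qed
  qed
qed

lemma lc_measurable:
  assumes "log_concave h" shows "h \<in> borel_measurable borel"
  unfolding borel_measurable_iff_ge
proof
  fix c :: real
  have "is_interval {x. c \<le> h x}"
  proof (cases "c \<le> 0")
    case True
    have "\<forall>x. 0 \<le> h x" using assms unfolding log_concave_def by blast
    hence "{x. c \<le> h x} = UNIV" using True by (auto intro: order_trans)
    then show ?thesis by simp
  next
    case False
    have "convex {x. c \<le> h x}"
      unfolding convex_alt
    proof (intro ballI allI impI)
      fix x y u :: real assume x: "x \<in> {x. c \<le> h x}" and y: "y \<in> {x. c \<le> h x}" and u: "0 \<le> u \<and> u \<le> 1"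
      have px: "h x > 0" "h y > 0" using x y False by auto
      from lc_real[OF assms _ _ px(2) px(1), of "1-u"] u
      have *: "h ((1-u)*y + u*x) > 0" "(1-u) * ln (h y) + u * ln (h x) \<le> ln (h ((1-u)*y+u*x))"
        by (auto simp: algebra_simps)
      have "ln c \<le> ln (h x)" "ln c \<le> ln (h y)" using x y False by auto
      hence "(1-u) * ln c + u * ln c \<le> (1-u) * ln (h y) + u * ln (h x)"
        using u by (intro add_mono mult_left_mono) auto
      hence "ln c \<le> ln (h ((1-u)*y+u*x))" using * by (simp add: algebra_simps)
      hence "c \<le> h ((1-u)*y+u*x)" using *(1) False by simp
      then show "(1 - u) *\<^sub>R y + u *\<^sub>R x \<in> {x. c \<le> h x}" by (simp add: add.commute)
    qed
    then show ?thesis by (simp add: is_interval_convex_1)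
  qed
  then show "{w \<in> space borel. c \<le> h w} \<in> sets borel"
    using real_interval_borel_measurable by simp
qed




definition lcset :: "(real \<Rightarrow> real) \<Rightarrow> (real \<Rightarrow> real) set" where
  "lcset g = {h. log_concave h \<and> (AE x in lborel. h x \<le> g x)}"
definition LS :: "(real \<Rightarrow> real) \<Rightarrow> ennreal" where
  "LS g = (SUP h \<in> lcset g. \<integral>\<^sup>+ x. ennreal (h x) \<partial>lborel)"
definition Tl :: "(real \<Rightarrow> real) \<Rightarrow> real \<Rightarrow> ennreal" where
  "Tl p a = (\<integral>\<^sup>+ x. ennreal (p x) * indicator (- {-a..a}) x \<partial>lborel)"
definition Il :: "(real \<Rightarrow> real) \<Rightarrow> real \<Rightarrow> ennreal" where
  "Il p a = (\<integral>\<^sup>+ x. ennreal (p x) * indicator {-a..a} x \<partial>lborel)"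

lemma lc_value_LS: "lc_value g = enn2real (LS g)"
  unfolding lc_value_def LS_def lcset_def by simp

lemma dens_nn: assumes "prob_density p" shows "(\<integral>\<^sup>+ x. ennreal (p x) \<partial>lborel) = 1"
proof -
  have "(\<integral>\<^sup>+ x. ennreal (p x) \<partial>lborel) = ennreal (integral\<^sup>L lborel p)"
    using assms unfolding prob_density_def by (intro nn_integral_eq_integral) auto
  then show ?thesis using assms unfolding prob_density_def by simp
qed

lemma dens_split: assumes "prob_density p" shows "Il p a + Tl p a = 1"
proof -
  have m: "p \<in> borel_measurable borel" using assms unfolding prob_density_def by simp
  have "(\<integral>\<^sup>+ x. ennreal (p x) \<partial>lborel) =
     (\<integral>\<^sup>+ x. ennreal (p x) * indicator {-a..a} x + ennreal (p x) * indicator (- {-a..a}) x \<partial>lborel)"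
    by (intro nn_integral_cong) (auto split: split_indicator)
  also have "\<dots> = Il p a + Tl p a" unfolding Il_def Tl_def using m
    by (intro nn_integral_add) auto
  finally show ?thesis using dens_nn[OF assms] by simp
qed

lemma LS_le1: assumes "prob_density p" shows "LS p \<le> 1"
  unfolding LS_def
proof (rule SUP_least)
  fix h assume "h \<in> lcset p"
  hence "AE x in lborel. ennreal (h x) \<le> ennreal (p x)"
    unfolding lcset_def by (auto elim: eventually_mono intro: ennreal_leI)
  hence "(\<integral>\<^sup>+ x. ennreal (h x) \<partial>lborel) \<le> (\<integral>\<^sup>+ x. ennreal (p x) \<partial>lborel)"
    by (rule nn_integral_mono_AE)
  then show "(\<integral>\<^sup>+ x. ennreal (h x) \<partial>lborel) \<le> 1" using dens_nn[OF assms] by simp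
qed

lemma trunc_lc:
  assumes "log_concave h" "c > 0"
  shows "log_concave (\<lambda>x. indicator {-a..a} x * h x * c)"
proof (rule lc_intro)
  have nn: "\<And>x. 0 \<le> h x" using assms unfolding log_concave_def by blast
  fix x show "0 \<le> indicator {-a..a} x * h x * c" using nn assms(2) by (simp add: indicator_def)
next
  have nn: "\<And>x. 0 \<le> h x" using assms unfolding log_concave_def by blast
  fix x y t :: real
  assume t: "0 \<le> t" "t \<le> 1" and px: "indicator {-a..a} x * h x * c > 0"
     and py: "indicator {-a..a} y * h y * c > 0"
  have xI: "x \<in> {-a..a}" and hx: "h x > 0"
    using px nn[of x] assms(2) by (auto simp: indicator_def split: if_splits simp: zero_less_mult_iff)
  have yI: "y \<in> {-a..a}" and hy: "h y > 0"
    using py nn[of y] assms(2) by (auto simp: indicator_def split: if_splits simp: zero_less_mult_iff)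
  define z where "z = t*x+(1-t)*y"
  have "t*(-a) + (1-t)*(-a) \<le> z" unfolding z_def using xI yI t
    by (intro add_mono mult_left_mono) auto
  moreover have "z \<le> t*a + (1-t)*a" unfolding z_def using xI yI t
    by (intro add_mono mult_left_mono) auto
  ultimately have zI: "z \<in> {-a..a}" by (simp add: algebra_simps)
  from lc_real[OF assms(1) t hx hy] have
    hz: "h z > 0" and ineq: "t * ln (h x) + (1-t) * ln (h y) \<le> ln (h z)" unfolding z_def by auto
  have "t * ln (h x * c) + (1-t) * ln (h y * c) = t * ln (h x) + (1-t) * ln (h y) + ln c"
    using hx hy assms(2) by (simp add: ln_mult algebra_simps)
  also have "\<dots> \<le> ln (h z) + ln c" using ineq by simp
  also have "\<dots> = ln (h z * c)" using hz assms(2) by (simp add: ln_mult)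
  finally show "indicator {-a..a} (t*x+(1-t)*y) * h (t*x+(1-t)*y) * c > 0 \<and>
      t * ln (indicator {-a..a} x * h x * c) + (1-t) * ln (indicator {-a..a} y * h y * c)
      \<le> ln (indicator {-a..a} (t*x+(1-t)*y) * h (t*x+(1-t)*y) * c)"
    using xI yI zI hz assms(2) unfolding z_def[symmetric] by simp
qed

lemma keyA:
  assumes p: "prob_density p" and q: "prob_density q" and d: "d \<ge> 0"
    and cond: "AE x in lborel. x \<in> {-a..a} \<longrightarrow> p x \<le> (1+d) * q x"
  shows "LS p \<le> ennreal (1+d) * LS q + Tl p a"
  unfolding LS_def[of p]
proof (rule SUP_least)
  fix h assume h: "h \<in> lcset p"
  have lch: "log_concave h" and hle: "AE x in lborel. h x \<le> p x" using h unfolding lcset_def by auto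
  have hm: "h \<in> borel_measurable borel" by (rule lc_measurable[OF lch])
  have qnn: "\<And>x. 0 \<le> q x" using q unfolding prob_density_def by auto
  have hnn: "\<And>x. 0 \<le> h x" using lch unfolding log_concave_def by auto
  define h' where "h' = (\<lambda>x. indicator {-a..a} x * h x * (1/(1+d)))"
  have h'm: "h' \<in> borel_measurable borel" unfolding h'_def using hm by measurable
  have "log_concave h'" unfolding h'_def by (rule trunc_lc[OF lch]) (use d in simp)
  moreover have "AE x in lborel. h' x \<le> q x"
    using hle cond
  proof eventually_elim
    case (elim x)
    show ?case
    proof (cases "x \<in> {-a..a}")
      case True
      have "h x \<le> (1+d) * q x" using elim True by auto
      then show ?thesis using True d unfolding h'_def by (simp add: field_simps)
    next
      case False then show ?thesis unfolding h'_def using qnn[of x] by simp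
    qed
  qed
  ultimately have h'in: "h' \<in> lcset q" unfolding lcset_def by simp
  have "(\<integral>\<^sup>+ x. ennreal (h x) \<partial>lborel) =
     (\<integral>\<^sup>+ x. ennreal (1+d) * ennreal (h' x) + ennreal (h x) * indicator (- {-a..a}) x \<partial>lborel)"
  proof (intro nn_integral_cong)
    fix x show "ennreal (h x) = ennreal (1+d) * ennreal (h' x) + ennreal (h x) * indicator (- {-a..a}) x"
    proof (cases "x \<in> {-a..a}")
      case True
      have "ennreal (1+d) * ennreal (h' x) = ennreal ((1+d) * h' x)"
        by (rule ennreal_mult[symmetric]) (use d hnn[of x] in \<open>auto simp: h'_def\<close>)
      also have "(1+d) * h' x = h x" using True d unfolding h'_def by simp
      finally show ?thesis using True by simp
    next
      case False then show ?thesis unfolding h'_def by simp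
    qed
  qed
  also have "\<dots> = ennreal (1+d) * (\<integral>\<^sup>+ x. ennreal (h' x) \<partial>lborel)
       + (\<integral>\<^sup>+ x. ennreal (h x) * indicator (- {-a..a}) x \<partial>lborel)"
    using h'm hm by (subst nn_integral_add) (auto simp: nn_integral_cmult)
  also have "\<dots> \<le> ennreal (1+d) * LS q + Tl p a"
  proof (intro add_mono mult_left_mono)
    show "(\<integral>\<^sup>+ x. ennreal (h' x) \<partial>lborel) \<le> LS q" unfolding LS_def
      using h'in by (rule SUP_upper)
    show "(\<integral>\<^sup>+ x. ennreal (h x) * indicator (- {-a..a}) x \<partial>lborel) \<le> Tl p a"
      unfolding Tl_def using hle
      by (intro nn_integral_mono_AE) (auto elim!: eventually_mono intro!: mult_right_mono ennreal_leI)
  qed auto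
  finally show "(\<integral>\<^sup>+ x. ennreal (h x) \<partial>lborel) \<le> ennreal (1+d) * LS q + Tl p a" .
qed




lemma sum1_fin: "(x::ennreal) + y = 1 \<Longrightarrow> x < top \<and> y < top"
  by (auto simp: less_top[symmetric])

lemma keyB:
  assumes p: "prob_density p" and q: "prob_density q" and d: "d \<ge> 0"
    and cond: "AE x in lborel. x \<in> {-a..a} \<longrightarrow> q x \<le> (1+d) * p x"
  shows "enn2real (Tl p a) \<le> d + enn2real (Tl q a)"
proof -
  have pm: "p \<in> borel_measurable borel" using p unfolding prob_density_def by simp
  have QI: "Il q a \<le> ennreal (1+d) * Il p a"
  proof -
    have "Il q a \<le> (\<integral>\<^sup>+ x. ennreal (1+d) * (ennreal (p x) * indicator {-a..a} x) \<partial>lborel)"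
      unfolding Il_def using cond
    proof (intro nn_integral_mono_AE, eventually_elim)
      case (elim x)
      show ?case
      proof (cases "x \<in> {-a..a}")
        case True
        have "ennreal (q x) \<le> ennreal ((1+d) * p x)" using elim True by (intro ennreal_leI) auto
        also have "\<dots> = ennreal (1+d) * ennreal (p x)"
          by (rule ennreal_mult) (use d p in \<open>auto simp: prob_density_def\<close>)
        finally show ?thesis using True by simp
      qed simp
    qed
    also have "\<dots> = ennreal (1+d) * Il p a" unfolding Il_def using pm
      by (intro nn_integral_cmult) auto
    finally show ?thesis .
  qed
  have sp: "Il p a + Tl p a = 1" and sq: "Il q a + Tl q a = 1" using dens_split p q by auto
  have f1: "Il p a < top" "Tl p a < top" "Il q a < top" "Tl q a < top"
    using sum1_fin[OF sp] sum1_fin[OF sq] by auto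
  have r1: "enn2real (Il p a) + enn2real (Tl p a) = 1" using enn2real_plus[OF f1(1,2)] sp by simp
  have r2: "enn2real (Il q a) + enn2real (Tl q a) = 1" using enn2real_plus[OF f1(3,4)] sq by simp
  have r0: "enn2real (Il q a) \<le> enn2real (ennreal (1+d) * Il p a)"
    using QI f1 by (intro enn2real_mono) (auto simp: ennreal_mult_less_top)
  have e1: "enn2real (ennreal (1+d)) = 1+d" using d by (intro enn2real_ennreal) simp
  have e2: "enn2real (ennreal (1+d) * Il p a) = (1+d) * enn2real (Il p a)" by (simp only: enn2real_mult e1)
  have r3: "enn2real (Il q a) \<le> (1+d) * enn2real (Il p a)" using r0 unfolding e2 .
  have z: "0 \<le> d * enn2real (Tl p a)" using d by simp
  have pI_eq: "enn2real (Il p a) = 1 - enn2real (Tl p a)" using r1 by simp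
  have w: "d * enn2real (Il p a) = d - d * enn2real (Tl p a)" unfolding pI_eq by (simp add: algebra_simps)
  have r3': "enn2real (Il q a) \<le> enn2real (Il p a) + d * enn2real (Il p a)" using r3 by (simp add: algebra_simps)
  show ?thesis using r1 r2 r3' w z by linarith
qed

lemma final_det:
  assumes p: "prob_density p" and f: "prob_density f" and d: "d \<ge> 0"
    and cond: "AE x in lborel. x \<in> {-a..a} \<longrightarrow> p x \<le> (1+d) * f x \<and> f x \<le> (1+d) * p x"
  shows "\<bar>lc_value p - lc_value f\<bar> \<le> 2*d + enn2real (Tl f a)"
proof -
  have c1: "AE x in lborel. x \<in> {-a..a} \<longrightarrow> p x \<le> (1+d) * f x" using cond by (auto elim: eventually_mono)
  have c2: "AE x in lborel. x \<in> {-a..a} \<longrightarrow> f x \<le> (1+d) * p x" using cond by (auto elim: eventually_mono)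
  have A1: "LS p \<le> ennreal (1+d) * LS f + Tl p a" by (rule keyA[OF p f d c1])
  have A2: "LS f \<le> ennreal (1+d) * LS p + Tl f a" by (rule keyA[OF f p d c2])
  have B: "enn2real (Tl p a) \<le> d + enn2real (Tl f a)" by (rule keyB[OF p f d c2])
  have sp: "Il p a + Tl p a = 1" and sf: "Il f a + Tl f a = 1" using dens_split p f by auto
  have tp: "Tl p a < top" "Tl f a < top"
    using sum1_fin[OF sp] sum1_fin[OF sf] by auto
  have lp: "LS p < top" "LS f < top" using LS_le1[OF p] LS_le1[OF f]
    by (auto simp: top.not_eq_extremum intro: le_less_trans)
  have lp1: "enn2real (LS p) \<le> 1" "enn2real (LS f) \<le> 1" using LS_le1[OF p] LS_le1[OF f]
    by (auto simp: enn2real_leI)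
  have "enn2real (LS p) \<le> enn2real (ennreal (1+d) * LS f + Tl p a)"
    using A1 tp lp by (intro enn2real_mono) (auto simp: ennreal_mult_less_top)
  also have "\<dots> = (1+d) * enn2real (LS f) + enn2real (Tl p a)"
    using tp lp d by (subst enn2real_plus) (auto simp: ennreal_mult_less_top enn2real_mult)
  finally have R1: "enn2real (LS p) \<le> (1+d) * enn2real (LS f) + enn2real (Tl p a)" .
  have "enn2real (LS f) \<le> enn2real (ennreal (1+d) * LS p + Tl f a)"
    using A2 tp lp by (intro enn2real_mono) (auto simp: ennreal_mult_less_top)
  also have "\<dots> = (1+d) * enn2real (LS p) + enn2real (Tl f a)"
    using tp lp d by (subst enn2real_plus) (auto simp: ennreal_mult_less_top enn2real_mult)
  finally have R2: "enn2real (LS f) \<le> (1+d) * enn2real (LS p) + enn2real (Tl f a)" .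
  have m1: "d * enn2real (LS f) \<le> d" using lp1 d by (simp add: mult_left_le)
  have m2: "d * enn2real (LS p) \<le> d" using lp1 d by (simp add: mult_left_le)
  show ?thesis unfolding lc_value_LS using R1 R2 m1 m2 B d by (simp add: algebra_simps abs_le_iff)
qed

lemma tail_small:
  assumes f: "prob_density f" and e: "e > 0"
  shows "\<exists>a>0. enn2real (Tl f a) < e"
proof -
  have fm: "f \<in> borel_measurable borel" using f unfolding prob_density_def by simp
  define g where "g = (\<lambda>i x. ennreal (f x) * indicator (- {- real (Suc i)..real (Suc i)}) x)"
  have "(\<integral>\<^sup>+ x. (INF i. g i x) \<partial>lborel) = (INF i. integral\<^sup>N lborel (g i))"
  proof (rule nn_integral_monotone_convergence_INF_AE')
    fix i show "AE x in lborel. g (Suc i) x \<le> g i x" unfolding g_def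
      by (auto split: split_indicator)
    show "g i \<in> borel_measurable lborel" for i unfolding g_def using fm by measurable
    have "integral\<^sup>N lborel (g 0) \<le> (\<integral>\<^sup>+ x. ennreal (f x) \<partial>lborel)" unfolding g_def
      by (intro nn_integral_mono) (auto split: split_indicator)
    then show "integral\<^sup>N lborel (g 0) < \<infinity>" using dens_nn[OF f] by (auto simp: le_less_trans)
  qed
  moreover have "(INF i. g i x) = 0" for x
  proof -
    obtain n :: nat where "\<bar>x\<bar> \<le> real n" using real_arch_simple by blast
    hence "g n x = 0" unfolding g_def by (auto split: split_indicator)
    hence "(INF i. g i x) \<le> 0" by (metis INF_lower UNIV_I)
    thus ?thesis by simp
  qed
  ultimately have "(INF i. integral\<^sup>N lborel (g i)) = 0" by simp
  hence "(INF i. integral\<^sup>N lborel (g i)) < ennreal e" using e by simp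
  then obtain i where i: "integral\<^sup>N lborel (g i) < ennreal e" by (auto simp: INF_less_iff)
  have "Tl f (real (Suc i)) = integral\<^sup>N lborel (g i)" unfolding Tl_def g_def by simp
  hence "Tl f (real (Suc i)) < ennreal e" using i by simp
  moreover have "ennreal e < top" by simp
  ultimately have "Tl f (real (Suc i)) < top" by (rule less_trans)
  hence "enn2real (Tl f (real (Suc i))) < e" using \<open>Tl f (real (Suc i)) < ennreal e\<close> e
    by (simp add: enn2real_less_iff)
  thus ?thesis by (intro exI[of _ "real (Suc i)"]) auto
qed




lemma mm:
  fixes u v d :: real
  assumes "0 \<le> u" "0 \<le> v" "0 \<le> d" "max u v \<le> (1+d) * min u v"
  shows "(u \<le> (1+d) * v) \<and> (v \<le> (1+d) * u)"
proof (cases "u \<le> v")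
  case True
  have "0 \<le> d * v" using assms by simp
  then show ?thesis using True assms(4) by (simp add: algebra_simps min_def max_def)
next
  case False
  have "0 \<le> d * u" using assms by simp
  then show ?thesis using False assms(4) by (simp add: algebra_simps min_def max_def)
qed

lemma rr:
  fixes u v d :: real
  assumes "0 \<le> u" "0 \<le> v" "0 \<le> d" "ratio u v < ennreal (1+d)"
  shows "max u v \<le> (1+d) * min u v"
proof (cases "min u v = 0")
  case True
  then show ?thesis using assms(4) by (auto simp: ratio_def split: if_splits)
next
  case False
  hence mp: "min u v > 0" using assms by (auto simp: min_def)
  hence "ennreal (max u v / min u v) < ennreal (1+d)" using assms(4) False by (simp add: ratio_def)
  hence "max u v / min u v < 1+d" using mp assms by (subst (asm) ennreal_less_iff) auto
  hence "max u v < (1+d) * min u v" using mp by (simp add: divide_less_eq)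
  then show ?thesis by simp
qed

lemma r1:
  fixes u v :: real
  assumes "0 \<le> u" "0 \<le> v"
  shows "1 \<le> ratio u v"
proof (cases "min u v = 0")
  case True
  then show ?thesis by (auto simp: ratio_def)
next
  case False
  hence mp: "min u v > 0" using assms by (auto simp: min_def)
  have "1 \<le> max u v / min u v" using mp by (simp add: le_divide_eq)
  then show ?thesis using False by (simp add: ratio_def)
qed

lemma esssup_lower:
  fixes g :: "real \<Rightarrow> ennreal"
  assumes "\<not> (AE x in lborel. x \<in> {-a..a} \<longrightarrow> g x < c)"
  shows "c \<le> esssup (restrict_space lborel {-a..a}) g"
proof (rule ccontr)
  assume "\<not> c \<le> esssup (restrict_space lborel {-a..a}) g"
  hence lt: "esssup (restrict_space lborel {-a..a}) g < c" by simp
  have "AE x in restrict_space lborel {-a..a}. g x < c"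
    using esssup_AE[of g "restrict_space lborel {-a..a}"] by (auto elim: eventually_mono intro: le_less_trans[OF _ lt])
  hence "AE x in lborel. x \<in> {-a..a} \<longrightarrow> g x < c"
    by (subst (asm) AE_restrict_space_iff) auto
  then show False using assms by simp
qed




theorem mainTheorem8:
  fixes M :: "'w measure" and f :: "real \<Rightarrow> real"
    and fhat :: "nat \<Rightarrow> 'w \<Rightarrow> real \<Rightarrow> real"
  assumes "prob_space M"
    and "prob_density f"
    and "\<And>n. (\<lambda>(\<omega>, x). fhat n \<omega> x) \<in> borel_measurable (M \<Otimes>\<^sub>M lborel)"
    and "\<And>n \<omega>. \<omega> \<in> space M \<Longrightarrow> prob_density (fhat n \<omega>)"
    and "\<And>a. a > 0 \<Longrightarrow>
           (\<lambda>n. \<integral>\<^sup>+ \<omega>. esssup (restrict_space lborel {-a..a})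
                            (\<lambda>x. ratio (fhat n \<omega> x) (f x)) \<partial>M) \<longlonglongrightarrow> 1"
  shows "\<forall>\<epsilon>>0. \<exists>A. (\<forall>n. A n \<in> sets M \<and>
             {\<omega> \<in> space M. \<bar>lc_value (fhat n \<omega>) - lc_value f\<bar> > \<epsilon>} \<subseteq> A n)
           \<and> (\<lambda>n. measure M (A n)) \<longlonglongrightarrow> 0"
proof (intro allI impI)
  fix \<epsilon> :: real assume \<epsilon>: "\<epsilon> > 0"
  interpret M: prob_space M by fact
  obtain a where a: "a > 0" "enn2real (Tl f a) < \<epsilon>/2"
    using tail_small[OF assms(2), of "\<epsilon>/2"] \<epsilon> by auto
  define d where "d = \<epsilon>/8"
  have d: "d > 0" using \<epsilon> unfolding d_def by simp
  have fm[measurable]: "f \<in> borel_measurable borel" using assms(2) unfolding prob_density_def by simp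
  have fnn: "\<And>x. 0 \<le> f x" using assms(2) unfolding prob_density_def by simp
  have hnn: "\<And>n \<omega> x. \<omega> \<in> space M \<Longrightarrow> 0 \<le> fhat n \<omega> x"
    using assms(4) unfolding prob_density_def by simp
  have Fm[measurable]: "(\<lambda>z. fhat n (fst z) (snd z)) \<in> borel_measurable (M \<Otimes>\<^sub>M lborel)" for n
    using assms(3)[of n] by (simp add: split_beta')
  define S where "S n = {z \<in> space (M \<Otimes>\<^sub>M lborel). snd z \<in> {-a..a} \<and>
      (1+d) * min (fhat n (fst z) (snd z)) (f (snd z)) < max (fhat n (fst z) (snd z)) (f (snd z))}" for n
  have Sm: "S n \<in> sets (M \<Otimes>\<^sub>M lborel)" for n
    unfolding S_def by measurable
  define A where "A n = {\<omega> \<in> space M. emeasure lborel (Pair \<omega> -` S n) \<noteq> 0}" for n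
  have Am: "A n \<in> sets M" for n
  proof -
    have meas: "(\<lambda>\<omega>. emeasure lborel (Pair \<omega> -` S n)) \<in> borel_measurable M"
      by (rule lborel.measurable_emeasure_Pair[OF Sm])
    have "{\<omega> \<in> space M. emeasure lborel (Pair \<omega> -` S n) = 0} \<in> sets M"
      using meas by (rule borel_measurable_eq) simp
    then show ?thesis unfolding A_def by (rule sets.sets_Collect_neg)
  qed
  have secm: "Pair \<omega> -` S n \<in> sets lborel" for \<omega> n by (rule sets_Pair1[OF Sm])
  have AEsec: "(AE x in lborel. x \<notin> Pair \<omega> -` S n) \<longleftrightarrow> emeasure lborel (Pair \<omega> -` S n) = 0" for \<omega> n
    by (rule AE_iff_measurable[OF secm]) auto
  have good: "\<bar>lc_value (fhat n \<omega>) - lc_value f\<bar> < \<epsilon>" if w: "\<omega> \<in> space M" "\<omega> \<notin> A n" for n \<omega>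
  proof -
    have "emeasure lborel (Pair \<omega> -` S n) = 0" using w unfolding A_def by simp
    hence ae: "AE x in lborel. x \<notin> Pair \<omega> -` S n" using AEsec by simp
    have "AE x in lborel. x \<in> {-a..a} \<longrightarrow> fhat n \<omega> x \<le> (1+d) * f x \<and> f x \<le> (1+d) * fhat n \<omega> x"
      using ae
    proof eventually_elim
      case (elim x)
      show ?case
      proof
        assume xI: "x \<in> {-a..a}"
        have "(\<omega>, x) \<in> space (M \<Otimes>\<^sub>M lborel)" using w by (simp add: space_pair_measure)
        hence "max (fhat n \<omega> x) (f x) \<le> (1+d) * min (fhat n \<omega> x) (f x)"
          using elim xI unfolding S_def by (auto simp: not_less)
        then show "fhat n \<omega> x \<le> (1+d) * f x \<and> f x \<le> (1+d) * fhat n \<omega> x"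
          using mm[OF hnn[OF w(1)] fnn, of d] d by auto
      qed
    qed
    from final_det[OF assms(4)[OF w(1)] assms(2) _ this] d
    have "\<bar>lc_value (fhat n \<omega>) - lc_value f\<bar> \<le> 2*d + enn2real (Tl f a)" by simp
    also have "\<dots> < \<epsilon>" using a(2) \<epsilon> unfolding d_def by simp
    finally show ?thesis .
  qed
  define \<rho> where "\<rho> n \<omega> = esssup (restrict_space lborel {-a..a}) (\<lambda>x. ratio (fhat n \<omega> x) (f x))" for n \<omega>
  have rho1: "1 \<le> \<rho> n \<omega>" if w: "\<omega> \<in> space M" for n \<omega>
    unfolding \<rho>_def
  proof (rule esssup_lower)
    show "\<not> (AE x in lborel. x \<in> {-a..a} \<longrightarrow> ratio (fhat n \<omega> x) (f x) < 1)"
    proof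
      assume "AE x in lborel. x \<in> {-a..a} \<longrightarrow> ratio (fhat n \<omega> x) (f x) < 1"
      hence "AE x in lborel. x \<notin> {-a..a}"
        using r1[OF hnn[OF w] fnn] by (auto elim!: eventually_mono simp: not_less[symmetric])
      hence "emeasure lborel {-a..a} = 0" by (subst (asm) AE_iff_measurable[of "{-a..a}"]) auto
      then show False using a(1) by simp
    qed
  qed
  have rhoA: "ennreal (1+d) \<le> \<rho> n \<omega>" if w: "\<omega> \<in> space M" "\<omega> \<in> A n" for n \<omega>
    unfolding \<rho>_def
  proof (rule esssup_lower)
    show "\<not> (AE x in lborel. x \<in> {-a..a} \<longrightarrow> ratio (fhat n \<omega> x) (f x) < ennreal (1+d))"
    proof
      assume "AE x in lborel. x \<in> {-a..a} \<longrightarrow> ratio (fhat n \<omega> x) (f x) < ennreal (1+d)"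
      hence "AE x in lborel. x \<notin> Pair \<omega> -` S n"
      proof eventually_elim
        case (elim x)
        show ?case
        proof
          assume "x \<in> Pair \<omega> -` S n"
          hence xI: "x \<in> {-a..a}" and lt: "(1+d) * min (fhat n \<omega> x) (f x) < max (fhat n \<omega> x) (f x)"
            unfolding S_def by auto
          have "max (fhat n \<omega> x) (f x) \<le> (1+d) * min (fhat n \<omega> x) (f x)"
            using rr[OF hnn[OF w(1)] fnn, of d] elim xI d by auto
          then show False using lt by linarith
        qed
      qed
      hence "emeasure lborel (Pair \<omega> -` S n) = 0" using AEsec by simp
      then show False using w unfolding A_def by simp
    qed
  qed
  have markov: "1 + ennreal d * emeasure M (A n) \<le> (\<integral>\<^sup>+ \<omega>. \<rho> n \<omega> \<partial>M)" for n
  proof -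
    have "(\<integral>\<^sup>+ \<omega>. 1 + ennreal d * indicator (A n) \<omega> \<partial>M) = 1 + ennreal d * emeasure M (A n)"
      using Am[of n] by (subst nn_integral_add) (auto simp: nn_integral_cmult M.emeasure_space_1)
    moreover have "(\<integral>\<^sup>+ \<omega>. 1 + ennreal d * indicator (A n) \<omega> \<partial>M) \<le> (\<integral>\<^sup>+ \<omega>. \<rho> n \<omega> \<partial>M)"
    proof (rule nn_integral_mono)
      fix \<omega> assume w: "\<omega> \<in> space M"
      show "1 + ennreal d * indicator (A n) \<omega> \<le> \<rho> n \<omega>"
      proof (cases "\<omega> \<in> A n")
        case True then show ?thesis using rhoA[OF w True] d by (simp add: ennreal_plus)
      next
        case False then show ?thesis using rho1[OF w] by simp
      qed
    qed
    ultimately show ?thesis by simp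
  qed
  have conv: "(\<lambda>n. \<integral>\<^sup>+ \<omega>. \<rho> n \<omega> \<partial>M) \<longlonglongrightarrow> 1"
    using assms(5)[OF a(1)] unfolding \<rho>_def .
  have mconv: "(\<lambda>n. measure M (A n)) \<longlonglongrightarrow> 0"
  proof (rule order_tendstoI)
    fix y :: real assume "y < 0"
    then show "\<forall>\<^sub>F n in sequentially. y < measure M (A n)"
      by (intro always_eventually allI) (meson less_le_trans measure_nonneg)
  next
    fix z :: real assume z: "0 < z"
    have "1 < ennreal (1 + d * z)" using z d by simp
    from order_tendstoD(2)[OF conv this]
    show "\<forall>\<^sub>F n in sequentially. measure M (A n) < z"
    proof eventually_elim
      case (elim n)
      have "ennreal (1 + d * measure M (A n)) = 1 + ennreal d * emeasure M (A n)"
        using d by (simp add: M.emeasure_eq_measure ennreal_plus ennreal_mult)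
      also have "\<dots> < ennreal (1 + d * z)" using markov[of n] elim by (rule le_less_trans)
      finally have "1 + d * measure M (A n) < 1 + d * z"
        using d by (subst (asm) ennreal_less_iff) auto
      then show ?case using d by simp
    qed
  qed
  show "\<exists>A. (\<forall>n. A n \<in> sets M \<and>
             {\<omega> \<in> space M. \<bar>lc_value (fhat n \<omega>) - lc_value f\<bar> > \<epsilon>} \<subseteq> A n)
           \<and> (\<lambda>n. measure M (A n)) \<longlonglongrightarrow> 0"
  proof (intro exI[of _ A] conjI allI)
    fix n
    show "A n \<in> sets M" by (rule Am)
    show "{\<omega> \<in> space M. \<bar>lc_value (fhat n \<omega>) - lc_value f\<bar> > \<epsilon>} \<subseteq> A n"
      using good[of _ n] by force
  qed (rule mconv)
qed


end
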